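(* Let $d\in\{0,1,\dots,S\}$ and let $\bar\xi_d$ be the uniform design on $\mathcal{X}^{(S)}_d$. Then its information matrix is block diagonal, $$\mathbf{M}(\bar\xi_d)=\begin{pmatrix} h_1(d)\,\mathbf{Id}_{K}\otimes\mathbf{M} & \mathbf{0} & \mathbf{0}\\ \mathbf{0} & h_2(d)\,\mathbf{Id}_{\binom K2}\otimes\mathbf{M}\otimes\mathbf{M} & \mathbf{0}\\ \mathbf{0} & \mathbf{0} & h_3(d)\,\mathbf{Id}_{\binom K3}\otimes\mathbf{M}\otimes\mathbf{M}\otimes\mathbf{M}\end{pmatrix},$$ where the three diagonal blocks correspond to the main-effect, first-order-interaction and second-order-interaction components of $\mathbf{f}$, and $$h_1(d)=\frac{d}{K},\qquad h_2(d)=\frac{d}{2vK(K-1)}\,(2Sv-2S-dv-v+2),\qquad h_3(d)=\frac{d\,\lambda(d)}{4v^2K(K-1)(K-2)},$$ with $$\lambda(d)=3S^2+3S^2v^2-6S^2v-3Sdv^2+3Sdv-6Sv^2+15Sv-9S+d^2v^2+3dv^2-6dv+2v^2-6v+6 .$$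
   Context: Fix integers $v\ge 2$, $K\ge 3$ and $S$ with $3\le S\le K$. Let $\mathbf{e}_i$ denote the $i$th unit vector of $\mathbb{R}^{v-1}$ and $\mathbf{1}_{v-1}$ the all-ones vector. Define $\mathbf{f}_1:\{0,1,\dots,v\}\to\mathbb{R}^{v-1}$ by $\mathbf{f}_1(i)=\mathbf{e}_i$ for $1\le i\le v-1$, $\mathbf{f}_1(v)=-\mathbf{1}_{v-1}$, $\mathbf{f}_1(0)=\mathbf{0}$. For $\mathbf{i}=(i_1,\dots,i_K)\in\{0,\dots,v\}^K$ let $\mathbf{f}(\mathbf{i})\in\mathbb{R}^p$ be the vector obtained by stacking the vectors $\mathbf{f}_1(i_k)$ ($k=1,\dots,K$), then $\mathbf{f}_1(i_k)\otimes\mathbf{f}_1(i_\ell)$ ($k<\ell$, lexicographic order), then $\mathbf{f}_1(i_k)\otimes\mathbf{f}_1(i_\ell)\otimes\mathbf{f}_1(i_m)$ ($k<\ell<m$, lexicographic order); here $\otimes$ is the Kronecker product and $p=p_1+p_2+p_3$ with $p_1=K(v-1)$, $p_2=\binom K2(v-1)^2$, $p_3=\binom K3(v-1)^3$. The design region $\mathcal{X}^{(S)}$ is the set of ordered pairs $(\mathbf{i},\mathbf{j})$ with $\mathbf{i},\mathbf{j}\in\{0,\dots,v\}^K$ for which there is a set $A$ of exactly $S$ attributes with $i_k,j_k\in\{1,\dots,v\}$ for $k\in A$ and $i_k=j_k=0$ for $k\notin A$. For $d\in\{0,\dots,S\}$, $\mathcal{X}^{(S)}_d$ is the set of pairs in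 $\mathcal{X}^{(S)}$ with $i_k\ne j_k$ for exactly $d$ indices $k$ (the comparison depth). An approximate design $\xi$ is a finitely supported probability measure on $\mathcal{X}^{(S)}$, with information matrix $\mathbf{M}(\xi)=\sum_{(\mathbf{i},\mathbf{j})}\xi(\mathbf{i},\mathbf{j})(\mathbf{f}(\mathbf{i})-\mathbf{f}(\mathbf{j}))(\mathbf{f}(\mathbf{i})-\mathbf{f}(\mathbf{j}))^\top$. The design $\bar\xi_d$ assigns weight $1/|\mathcal{X}^{(S)}_d|$ to each pair of $\mathcal{X}^{(S)}_d$ and $0$ elsewhere. Finally $\mathbf{M}=\frac{2}{v-1}(\mathbf{Id}_{v-1}+\mathbf{1}_{v-1}\mathbf{1}_{v-1}^\top)$. *)

theory Defs
  imports "HOL-Probability.Probability"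
begin

text \<open>Attributes are indexed 0..K-1, levels 1..v, level 0 = attribute absent.
  A profile is a function nat => nat, with values in 0..v below K and 0 from K on.\<close>

type_synonym profile = "nat \<Rightarrow> nat"

definition profiles :: "nat \<Rightarrow> nat \<Rightarrow> profile set" where
  "profiles K v = {i. (\<forall>k<K. i k \<le> v) \<and> (\<forall>k\<ge>K. i k = 0)}"

definition f1 :: "nat \<Rightarrow> nat \<Rightarrow> nat \<Rightarrow> real" where
  "f1 v l a = (if l = 0 then 0 else if l = v then -1 else if l = a then 1 else 0)"

text \<open>Coordinates of the regression vector f, labelled structurally:
  Main k a: coordinate a of block f_1(i_k);
  Int2 k l a b: coordinate (a,b) of f_1(i_k) (x) f_1(i_l) (Kronecker, lexicographic);
  Int3 k l m a b c: coordinate (a,b,c) of f_1(i_k) (x) f_1(i_l) (x) f_1(i_m).\<close>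
datatype coord = Main nat nat | Int2 nat nat nat nat | Int3 nat nat nat nat nat nat

definition coords :: "nat \<Rightarrow> nat \<Rightarrow> coord set" where
  "coords K v =
     {Main k a | k a. k < K \<and> 1 \<le> a \<and> a \<le> v - 1}
   \<union> {Int2 k l a b | k l a b. k < l \<and> l < K \<and> 1 \<le> a \<and> a \<le> v - 1 \<and> 1 \<le> b \<and> b \<le> v - 1}
   \<union> {Int3 k l m a b c | k l m a b c. k < l \<and> l < m \<and> m < K \<and>
        1 \<le> a \<and> a \<le> v - 1 \<and> 1 \<le> b \<and> b \<le> v - 1 \<and> 1 \<le> c \<and> c \<le> v - 1}"

fun fvec :: "nat \<Rightarrow> profile \<Rightarrow> coord \<Rightarrow> real" where
  "fvec v i (Main k a) = f1 v (i k) a"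
| "fvec v i (Int2 k l a b) = f1 v (i k) a * f1 v (i l) b"
| "fvec v i (Int3 k l m a b c) = f1 v (i k) a * f1 v (i l) b * f1 v (i m) c"

definition design_region :: "nat \<Rightarrow> nat \<Rightarrow> nat \<Rightarrow> (profile \<times> profile) set" where
  "design_region K v S = {(i, j). i \<in> profiles K v \<and> j \<in> profiles K v \<and>
     (\<exists>A. A \<subseteq> {..<K} \<and> card A = S \<and>
        (\<forall>k<K. (k \<in> A \<longrightarrow> i k \<in> {1..v} \<and> j k \<in> {1..v}) \<and>
                (k \<notin> A \<longrightarrow> i k = 0 \<and> j k = 0)))}"

definition design_region_d :: "nat \<Rightarrow> nat \<Rightarrow> nat \<Rightarrow> nat \<Rightarrow> (profile \<times> profile) set" where
  "design_region_d K v S d = {(i, j) \<in> design_region K v S. card {k. k < K \<and> i k \<noteq> j k} = d}"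

definition info_matrix :: "nat \<Rightarrow> (profile \<times> profile) pmf \<Rightarrow> coord \<Rightarrow> coord \<Rightarrow> real" where
  "info_matrix v \<xi> p q = (\<Sum>x\<in>set_pmf \<xi>. pmf \<xi> x *
       ((fvec v (fst x) p - fvec v (snd x) p) * (fvec v (fst x) q - fvec v (snd x) q)))"

definition uniform_design :: "nat \<Rightarrow> nat \<Rightarrow> nat \<Rightarrow> nat \<Rightarrow> (profile \<times> profile) pmf" where
  "uniform_design K v S d = pmf_of_set (design_region_d K v S d)"

definition Mmat :: "nat \<Rightarrow> nat \<Rightarrow> nat \<Rightarrow> real" where
  "Mmat v a b = 2 / (real v - 1) * ((if a = b then 1 else 0) + 1)"

definition h1 :: "nat \<Rightarrow> nat \<Rightarrow> nat \<Rightarrow> nat \<Rightarrow> real" where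
  "h1 K v S d = real d / real K"

definition h2 :: "nat \<Rightarrow> nat \<Rightarrow> nat \<Rightarrow> nat \<Rightarrow> real" where
  "h2 K v S d = real d / (2 * real v * real K * (real K - 1)) *
     (2 * real S * real v - 2 * real S - real d * real v - real v + 2)"

definition lambda_d :: "nat \<Rightarrow> nat \<Rightarrow> nat \<Rightarrow> real" where
  "lambda_d v S d =
     3*(real S)^2 + 3*(real S)^2*(real v)^2 - 6*(real S)^2*real v
     - 3*real S*real d*(real v)^2 + 3*real S*real d*real v - 6*real S*(real v)^2
     + 15*real S*real v - 9*real S
     + (real d)^2*(real v)^2 + 3*real d*(real v)^2 - 6*real d*real v
     + 2*(real v)^2 - 6*real v + 6"

definition h3 :: "nat \<Rightarrow> nat \<Rightarrow> nat \<Rightarrow> nat \<Rightarrow> real" where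
  "h3 K v S d = real d * lambda_d v S d /
     (4 * (real v)^2 * real K * (real K - 1) * (real K - 2))"

text \<open>The claimed block-diagonal matrix, entry (p,q): blocks
  h1 Id_K (x) M, h2 Id_(K choose 2) (x) M (x) M, h3 Id_(K choose 3) (x) M (x) M (x) M,
  zero off the diagonal blocks.\<close>
fun block_matrix :: "nat \<Rightarrow> nat \<Rightarrow> nat \<Rightarrow> nat \<Rightarrow> coord \<Rightarrow> coord \<Rightarrow> real" where
  "block_matrix K v S d (Main k a) (Main k' a') =
     (if k = k' then h1 K v S d * Mmat v a a' else 0)"
| "block_matrix K v S d (Int2 k l a b) (Int2 k' l' a' b') =
     (if (k, l) = (k', l') then h2 K v S d * (Mmat v a a' * Mmat v b b') else 0)"
| "block_matrix K v S d (Int3 k l m a b c) (Int3 k' l' m' a' b' c') =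
     (if (k, l, m) = (k', l', m') then h3 K v S d * (Mmat v a a' * Mmat v b b' * Mmat v c c') else 0)"
| "block_matrix K v S d _ _ = 0"

end

theory Submission
  imports Defs
begin

lemma sum_f1: assumes "1 \<le> a" "a < v" shows "(\<Sum>l\<in>{1..v}. f1 v l a) = 0"
proof -
  have "(\<Sum>l\<in>{1..v}. f1 v l a) = (\<Sum>l\<in>{1..v}. (if l = v then -1 else 0) + (if l = a then 1 else 0))"
    using assms by (intro sum.cong) (auto simp: f1_def)
  also have "\<dots> = 0" using assms by (simp add: sum.distrib)
  finally show ?thesis .
qed

lemma sum_f1f1: assumes "1 \<le> a" "a < v" "1 \<le> b" "b < v"
  shows "(\<Sum>l\<in>{1..v}. f1 v l a * f1 v l b) = (if a = b then 1 else 0) + 1"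
proof -
  have "(\<Sum>l\<in>{1..v}. f1 v l a * f1 v l b) = (\<Sum>l\<in>{1..v}. (if l = v then 1 else 0) + (if l = a then (if a = b then 1 else 0) else 0))"
    using assms by (intro sum.cong) (auto simp: f1_def)
  also have "\<dots> = (if a = b then 1 else 0) + 1" using assms by (simp add: sum.distrib)
  finally show ?thesis .
qed

definition LL :: "nat \<Rightarrow> nat set \<Rightarrow> nat set \<Rightarrow> nat \<Rightarrow> (nat \<times> nat) set" where
  "LL v A D t = (if t \<in> A then (if t \<in> D then (SIGMA l:{1..v}. {1..v} - {l}) else (\<lambda>l. (l,l)) ` {1..v}) else {(0,0)})"

lemma finite_LL: "finite (LL v A D t)"
  by (auto simp: LL_def)

lemma sum_LL_diag:
  fixes g h :: "nat \<Rightarrow> real"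
  shows "(\<Sum>z\<in>LL v A D t. g (fst z) * h (fst z)) =
    (if t \<in> A then (if t \<in> D then (real v - 1) * (\<Sum>l\<in>{1..v}. g l * h l) else (\<Sum>l\<in>{1..v}. g l * h l)) else g 0 * h 0)"
    and "(\<Sum>z\<in>LL v A D t. g (snd z) * h (snd z)) =
    (if t \<in> A then (if t \<in> D then (real v - 1) * (\<Sum>l\<in>{1..v}. g l * h l) else (\<Sum>l\<in>{1..v}. g l * h l)) else g 0 * h 0)"
    and "(\<Sum>z\<in>LL v A D t. g (fst z) * h (snd z)) =
    (if t \<in> A then (if t \<in> D then (\<Sum>l\<in>{1..v}. g l) * (\<Sum>l\<in>{1..v}. h l) - (\<Sum>l\<in>{1..v}. g l * h l) else (\<Sum>l\<in>{1..v}. g l * h l)) else g 0 * h 0)"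
    and "(\<Sum>z\<in>LL v A D t. g (snd z) * h (fst z)) =
    (if t \<in> A then (if t \<in> D then (\<Sum>l\<in>{1..v}. g l) * (\<Sum>l\<in>{1..v}. h l) - (\<Sum>l\<in>{1..v}. g l * h l) else (\<Sum>l\<in>{1..v}. g l * h l)) else g 0 * h 0)"
proof -
  have inj: "inj_on (\<lambda>l::nat. (l,l)) X" for X by (auto simp: inj_on_def)
  have S1: "(\<Sum>z\<in>(SIGMA l:{1..v}. {1..v} - {l}). g (fst z) * h (fst z)) = (real v - 1) * (\<Sum>l\<in>{1..v}. g l * h l)"
  proof -
    have "(\<Sum>z\<in>(SIGMA l:{1..v}. {1..v} - {l}). g (fst z) * h (fst z)) = (\<Sum>l\<in>{1..v}. \<Sum>l'\<in>{1..v} - {l}. g l * h l)"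
      by (subst sum.Sigma) (simp_all add: split_def)
    also have "\<dots> = (\<Sum>l\<in>{1..v}. (real v - 1) * (g l * h l))"
      by (intro sum.cong refl) simp
    also have "\<dots> = (real v - 1) * (\<Sum>l\<in>{1..v}. g l * h l)"
      by (simp add: sum_distrib_left)
    finally show ?thesis .
  qed
  have S2: "(\<Sum>z\<in>(SIGMA l:{1..v}. {1..v} - {l}). g (snd z) * h (snd z)) = (real v - 1) * (\<Sum>l\<in>{1..v}. g l * h l)"
  proof -
    have "(\<Sum>z\<in>(SIGMA l:{1..v}. {1..v} - {l}). g (snd z) * h (snd z)) = (\<Sum>l\<in>{1..v}. \<Sum>l'\<in>{1..v} - {l}. g l' * h l')"
      by (subst sum.Sigma) (simp_all add: split_def)
    also have "\<dots> = (\<Sum>l\<in>{1..v}. (\<Sum>l'\<in>{1..v}. g l' * h l') - g l * h l)"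
      by (intro sum.cong refl) (simp add: sum_diff1)
    also have "\<dots> = (real v - 1) * (\<Sum>l\<in>{1..v}. g l * h l)"
      by (simp add: sum_subtractf algebra_simps)
    finally show ?thesis .
  qed
  have S3: "(\<Sum>z\<in>(SIGMA l:{1..v}. {1..v} - {l}). g (fst z) * h (snd z)) = (\<Sum>l\<in>{1..v}. g l) * (\<Sum>l\<in>{1..v}. h l) - (\<Sum>l\<in>{1..v}. g l * h l)"
  proof -
    have "(\<Sum>z\<in>(SIGMA l:{1..v}. {1..v} - {l}). g (fst z) * h (snd z)) = (\<Sum>l\<in>{1..v}. \<Sum>l'\<in>{1..v} - {l}. g l * h l')"
      by (subst sum.Sigma) (simp_all add: split_def)
    also have "\<dots> = (\<Sum>l\<in>{1..v}. g l * (\<Sum>l'\<in>{1..v} - {l}. h l'))"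
      by (simp add: sum_distrib_left)
    also have "\<dots> = (\<Sum>l\<in>{1..v}. g l * (\<Sum>l'\<in>{1..v}. h l') - g l * h l)"
      by (intro sum.cong refl) (simp add: sum_diff1 algebra_simps)
    also have "\<dots> = (\<Sum>l\<in>{1..v}. g l) * (\<Sum>l\<in>{1..v}. h l) - (\<Sum>l\<in>{1..v}. g l * h l)"
      by (simp add: sum_subtractf sum_distrib_right)
    finally show ?thesis .
  qed
  have S4: "(\<Sum>z\<in>(SIGMA l:{1..v}. {1..v} - {l}). g (snd z) * h (fst z)) = (\<Sum>l\<in>{1..v}. g l) * (\<Sum>l\<in>{1..v}. h l) - (\<Sum>l\<in>{1..v}. g l * h l)"
  proof -
    have "(\<Sum>z\<in>(SIGMA l:{1..v}. {1..v} - {l}). g (snd z) * h (fst z)) = (\<Sum>l\<in>{1..v}. \<Sum>l'\<in>{1..v} - {l}. h l * g l')"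
      by (subst sum.Sigma) (simp_all add: split_def mult.commute)
    also have "\<dots> = (\<Sum>l\<in>{1..v}. h l * (\<Sum>l'\<in>{1..v} - {l}. g l'))"
      by (simp add: sum_distrib_left)
    also have "\<dots> = (\<Sum>l\<in>{1..v}. h l * (\<Sum>l'\<in>{1..v}. g l') - g l * h l)"
      by (intro sum.cong refl) (simp add: sum_diff1 algebra_simps)
    also have "\<dots> = (\<Sum>l\<in>{1..v}. g l) * (\<Sum>l\<in>{1..v}. h l) - (\<Sum>l\<in>{1..v}. g l * h l)"
      by (simp add: sum_subtractf sum_distrib_right[symmetric] sum_distrib_left[symmetric] mult.commute)
    finally show ?thesis .
  qed
  show "(\<Sum>z\<in>LL v A D t. g (fst z) * h (fst z)) =
    (if t \<in> A then (if t \<in> D then (real v - 1) * (\<Sum>l\<in>{1..v}. g l * h l) else (\<Sum>l\<in>{1..v}. g l * h l)) else g 0 * h 0)"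
    using S1 by (simp add: LL_def sum.reindex[OF inj])
  show "(\<Sum>z\<in>LL v A D t. g (snd z) * h (snd z)) =
    (if t \<in> A then (if t \<in> D then (real v - 1) * (\<Sum>l\<in>{1..v}. g l * h l) else (\<Sum>l\<in>{1..v}. g l * h l)) else g 0 * h 0)"
    using S2 by (simp add: LL_def sum.reindex[OF inj])
  show "(\<Sum>z\<in>LL v A D t. g (fst z) * h (snd z)) =
    (if t \<in> A then (if t \<in> D then (\<Sum>l\<in>{1..v}. g l) * (\<Sum>l\<in>{1..v}. h l) - (\<Sum>l\<in>{1..v}. g l * h l) else (\<Sum>l\<in>{1..v}. g l * h l)) else g 0 * h 0)"
    using S3 by (simp add: LL_def sum.reindex[OF inj])
  show "(\<Sum>z\<in>LL v A D t. g (snd z) * h (fst z)) =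
    (if t \<in> A then (if t \<in> D then (\<Sum>l\<in>{1..v}. g l) * (\<Sum>l\<in>{1..v}. h l) - (\<Sum>l\<in>{1..v}. g l * h l) else (\<Sum>l\<in>{1..v}. g l * h l)) else g 0 * h 0)"
    using S4 by (simp add: LL_def sum.reindex[OF inj])
qed

definition Ypairs :: "nat \<Rightarrow> nat set \<Rightarrow> nat set \<Rightarrow> (profile \<times> profile) set" where
  "Ypairs v A D = {(i,j). \<forall>t. (i t, j t) \<in> LL v A D t}"

definition AD :: "nat \<Rightarrow> nat \<Rightarrow> nat \<Rightarrow> (nat set \<times> nat set) set" where
  "AD K S d = {(A,D). A \<subseteq> {..<K} \<and> card A = S \<and> D \<subseteq> A \<and> card D = d}"

definition ext :: "nat \<Rightarrow> (nat \<Rightarrow> nat \<times> nat) \<Rightarrow> profile \<times> profile" where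
  "ext K h = (\<lambda>t. if t < K then fst (h t) else 0, \<lambda>t. if t < K then snd (h t) else 0)"

lemma LL_out: "t \<notin> A \<Longrightarrow> LL v A D t = {(0,0)}" by (simp add: LL_def)

lemma Ypairs_image:
  assumes "A \<subseteq> {..<K}"
  shows "Ypairs v A D = ext K ` PiE {..<K} (LL v A D)"
proof
  show "Ypairs v A D \<subseteq> ext K ` PiE {..<K} (LL v A D)"
  proof
    fix x assume x: "x \<in> Ypairs v A D"
    obtain i j where ij: "x = (i,j)" by (cases x)
    have mem: "(i t, j t) \<in> LL v A D t" for t using x ij by (auto simp: Ypairs_def)
    define h where "h = (\<lambda>t\<in>{..<K}. (i t, j t))"
    have "h \<in> PiE {..<K} (LL v A D)" using mem by (auto simp: h_def)
    moreover have "ext K h = x"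
    proof -
      have "i t = (if t < K then fst (h t) else 0)" for t
      proof (cases "t < K")
        case False then have "t \<notin> A" using assms by auto
        then show ?thesis using mem[of t] False by (simp add: LL_out)
      qed (simp add: h_def)
      moreover have "j t = (if t < K then snd (h t) else 0)" for t
      proof (cases "t < K")
        case False then have "t \<notin> A" using assms by auto
        then show ?thesis using mem[of t] False by (simp add: LL_out)
      qed (simp add: h_def)
      ultimately show ?thesis using ij by (auto simp: ext_def)
    qed
    ultimately show "x \<in> ext K ` PiE {..<K} (LL v A D)" by blast
  qed
next
  show "ext K ` PiE {..<K} (LL v A D) \<subseteq> Ypairs v A D"
  proof
    fix x assume "x \<in> ext K ` PiE {..<K} (LL v A D)"
    then obtain h where h: "h \<in> PiE {..<K} (LL v A D)" and x: "x = ext K h" by blast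
    have "((if t < K then fst (h t) else 0), (if t < K then snd (h t) else 0)) \<in> LL v A D t" for t
    proof (cases "t < K")
      case True then show ?thesis using h by (auto simp: PiE_iff)
    next
      case False then have "t \<notin> A" using assms by auto
      then show ?thesis using False by (simp add: LL_out)
    qed
    then show "x \<in> Ypairs v A D" by (simp add: x ext_def Ypairs_def)
  qed
qed

lemma inj_ext: "inj_on (ext K) (PiE {..<K} B)"
proof (rule inj_onI)
  fix h h' assume h: "h \<in> PiE {..<K} B" and h': "h' \<in> PiE {..<K} B" and e: "ext K h = ext K h'"
  show "h = h'"
  proof (rule PiE_ext[OF h h'])
    fix t assume t: "t \<in> {..<K}"
    have "fst (h t) = fst (h' t)" using e t by (simp add: ext_def fun_eq_iff) (metis)
    moreover have "snd (h t) = snd (h' t)" using e t by (simp add: ext_def fun_eq_iff) (metis)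
    ultimately show "h t = h' t" by (simp add: prod_eq_iff)
  qed
qed

lemma sum_Ypairs_prod:
  fixes \<psi> :: "nat \<Rightarrow> nat \<times> nat \<Rightarrow> real"
  assumes "A \<subseteq> {..<K}"
  shows "(\<Sum>x\<in>Ypairs v A D. \<Prod>t<K. \<psi> t (fst x t, snd x t)) = (\<Prod>t<K. \<Sum>z\<in>LL v A D t. \<psi> t z)"
proof -
  have "(\<Sum>x\<in>Ypairs v A D. \<Prod>t<K. \<psi> t (fst x t, snd x t)) =
        (\<Sum>h\<in>PiE {..<K} (LL v A D). \<Prod>t<K. \<psi> t (fst (ext K h) t, snd (ext K h) t))"
    unfolding Ypairs_image[OF assms] by (rule sum.reindex[OF inj_ext, unfolded comp_def])
  also have "\<dots> = (\<Sum>h\<in>PiE {..<K} (LL v A D). \<Prod>t<K. \<psi> t (h t))"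
    by (intro sum.cong refl prod.cong) (auto simp: ext_def)
  also have "\<dots> = (\<Prod>t<K. \<Sum>z\<in>LL v A D t. \<psi> t z)"
    by (rule prod_sum_PiE[symmetric]) (auto simp: finite_LL)
  finally show ?thesis .
qed

lemma finite_Ypairs: "A \<subseteq> {..<K} \<Longrightarrow> finite (Ypairs v A D)"
  by (simp add: Ypairs_image finite_LL finite_PiE)

lemma card_LL: "card (LL v A D t) = (if t \<in> A then (if t \<in> D then v * v - v else v) else 1)"
proof -
  have inj: "inj_on (\<lambda>l::nat. (l,l)) X" for X by (auto simp: inj_on_def)
  have "card (SIGMA l:{1..v}. {1..v} - {l}) = v * v - v"
    by (simp add: card_SigmaI diff_mult_distrib2)
  then show ?thesis by (simp add: LL_def card_image[OF inj])
qed

lemma LL_mem_iff: "(x, y) \<in> LL v A D t \<longleftrightarrow>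
   (if t \<in> A then x \<in> {1..v} \<and> y \<in> {1..v} \<and> (t \<in> D \<longleftrightarrow> x \<noteq> y) else x = 0 \<and> y = 0)"
  by (auto simp: LL_def)

lemma design_decomp:
  shows "design_region_d K v S d = (\<Union>(A,D)\<in>AD K S d. Ypairs v A D)"
proof
  show "design_region_d K v S d \<subseteq> (\<Union>(A,D)\<in>AD K S d. Ypairs v A D)"
  proof
    fix x assume x: "x \<in> design_region_d K v S d"
    obtain i j where ij: "x = (i,j)" by (cases x)
    from x ij obtain A where ip: "i \<in> profiles K v" and jp: "j \<in> profiles K v"
      and A: "A \<subseteq> {..<K}" "card A = S"
      and Ak: "\<forall>k<K. (k \<in> A \<longrightarrow> i k \<in> {1..v} \<and> j k \<in> {1..v}) \<and> (k \<notin> A \<longrightarrow> i k = 0 \<and> j k = 0)"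
      and dcard: "card {k. k < K \<and> i k \<noteq> j k} = d"
      by (auto simp: design_region_d_def design_region_def)
    define D where "D = {k. k < K \<and> i k \<noteq> j k}"
    have DA: "D \<subseteq> A" using Ak by (auto simp: D_def)
    have "(A, D) \<in> AD K S d" using A DA dcard by (simp add: AD_def D_def)
    moreover have "(i,j) \<in> Ypairs v A D"
    proof -
      have "(i t, j t) \<in> LL v A D t" for t
      proof (cases "t < K")
        case True then show ?thesis using Ak by (auto simp: LL_mem_iff D_def)
      next
        case False
        then have "t \<notin> A" using A by auto
        moreover have "i t = 0" "j t = 0" using ip jp False by (auto simp: profiles_def)
        ultimately show ?thesis by (simp add: LL_mem_iff)
      qed
      then show ?thesis by (simp add: Ypairs_def)
    qed
    ultimately show "x \<in> (\<Union>(A,D)\<in>AD K S d. Ypairs v A D)" using ij by blast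
  qed
next
  show "(\<Union>(A,D)\<in>AD K S d. Ypairs v A D) \<subseteq> design_region_d K v S d"
  proof
    fix x assume "x \<in> (\<Union>(A,D)\<in>AD K S d. Ypairs v A D)"
    then obtain A D where AD: "(A,D) \<in> AD K S d" and xY: "x \<in> Ypairs v A D" by blast
    obtain i j where ij: "x = (i,j)" by (cases x)
    have A: "A \<subseteq> {..<K}" "card A = S" "D \<subseteq> A" "card D = d" using AD by (auto simp: AD_def)
    have mem: "(i t, j t) \<in> LL v A D t" for t using xY ij by (simp add: Ypairs_def)
    have out: "t \<notin> A \<Longrightarrow> i t = 0 \<and> j t = 0" for t using mem[of t] by (simp add: LL_mem_iff)
    have inA: "t \<in> A \<Longrightarrow> i t \<in> {1..v} \<and> j t \<in> {1..v} \<and> (t \<in> D \<longleftrightarrow> i t \<noteq> j t)" for t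
      using mem[of t] by (simp add: LL_mem_iff)
    have ip: "i \<in> profiles K v" "j \<in> profiles K v"
      unfolding profiles_def
    proof (safe)
      fix k assume "k < K" then show "i k \<le> v" "j k \<le> v" using inA[of k] out[of k] by (cases "k \<in> A"; auto)+
    next
      fix k assume "K \<le> k" then have "k \<notin> A" using A by auto
      then show "i k = 0" "j k = 0" using out by auto
    qed
    have "{k. k < K \<and> i k \<noteq> j k} = D"
    proof (rule set_eqI, rule iffI)
      fix k assume "k \<in> {k. k < K \<and> i k \<noteq> j k}"
      then show "k \<in> D" using inA[of k] out[of k] by (cases "k \<in> A") auto
    next
      fix k assume k: "k \<in> D"
      then have "k \<in> A" "k < K" using A by auto
      then show "k \<in> {k. k < K \<and> i k \<noteq> j k}" using inA[of k] k by auto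
    qed
    then show "x \<in> design_region_d K v S d" using ip A inA out ij
      unfolding design_region_d_def design_region_def
      by (auto intro!: exI[of _ A])
  qed
qed

lemma Ypairs_determines:
  assumes m: "\<And>t. (i t, j t) \<in> LL v A D t" and DA: "D \<subseteq> A"
  shows "A = {t. i t \<noteq> 0} \<and> D = {t. i t \<noteq> j t}"
proof -
  have "t \<in> A \<longleftrightarrow> i t \<noteq> 0" for t using m[of t] by (cases "t \<in> A") (auto simp: LL_mem_iff)
  moreover have "t \<in> D \<longleftrightarrow> i t \<noteq> j t" for t using m[of t] DA by (cases "t \<in> A") (auto simp: LL_mem_iff)
  ultimately show ?thesis by blast
qed

lemma Ypairs_disjoint:
  assumes "(A,D) \<in> AD K S d" "(A',D') \<in> AD K S d" "(A,D) \<noteq> (A',D')"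
  shows "Ypairs v A D \<inter> Ypairs v A' D' = {}"
proof (rule ccontr)
  assume "Ypairs v A D \<inter> Ypairs v A' D' \<noteq> {}"
  then obtain i j where m: "(i,j) \<in> Ypairs v A D" "(i,j) \<in> Ypairs v A' D'" by auto
  have m1: "\<And>t. (i t, j t) \<in> LL v A D t" "\<And>t. (i t, j t) \<in> LL v A' D' t" using m by (auto simp: Ypairs_def)
  have DA: "D \<subseteq> A" "D' \<subseteq> A'" using assms by (auto simp: AD_def)
  show False using Ypairs_determines[OF m1(1) DA(1)] Ypairs_determines[OF m1(2) DA(2)] assms(3) by simp
qed

lemma finite_AD: "finite (AD K S d)"
proof -
  have "AD K S d \<subseteq> Pow {..<K} \<times> Pow {..<K}" by (auto simp: AD_def)
  then show ?thesis by (rule finite_subset) auto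
qed

lemma sum_design:
  fixes F :: "profile \<times> profile \<Rightarrow> real"
  shows "(\<Sum>x\<in>design_region_d K v S d. F x) = (\<Sum>(A,D)\<in>AD K S d. \<Sum>x\<in>Ypairs v A D. F x)"
proof -
  have "(\<Sum>x\<in>design_region_d K v S d. F x) = (\<Sum>y\<in>AD K S d. \<Sum>x\<in>(case y of (A,D) \<Rightarrow> Ypairs v A D). F x)"
    unfolding design_decomp
  proof (rule sum.UNION_disjoint)
    show "finite (AD K S d)" by (rule finite_AD)
    show "\<forall>y\<in>AD K S d. finite (case y of (A, D) \<Rightarrow> Ypairs v A D)"
      by (auto simp: AD_def intro!: finite_Ypairs)
    show "\<forall>y\<in>AD K S d. \<forall>z\<in>AD K S d. y \<noteq> z \<longrightarrow> (case y of (A, D) \<Rightarrow> Ypairs v A D) \<inter> (case z of (A, D) \<Rightarrow> Ypairs v A D) = {}"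
      using Ypairs_disjoint by fast
  qed
  then show ?thesis by (simp add: case_prod_unfold)
qed

lemma finite_design: "finite (design_region_d K v S d)"
  unfolding design_decomp using finite_AD by (auto simp: AD_def intro!: finite_Ypairs)

fun sel :: "coord \<Rightarrow> nat \<Rightarrow> nat option" where
  "sel (Main k a) t = (if t = k then Some a else None)"
| "sel (Int2 k l a b) t = (if t = k then Some a else if t = l then Some b else None)"
| "sel (Int3 k l m a b c) t = (if t = k then Some a else if t = l then Some b else if t = m then Some c else None)"

fun seldom :: "coord \<Rightarrow> nat set" where
  "seldom (Main k a) = {k}"
| "seldom (Int2 k l a b) = {k, l}"
| "seldom (Int3 k l m a b c) = {k, l, m}"

fun fx :: "nat \<Rightarrow> nat option \<Rightarrow> nat \<Rightarrow> real" where
  "fx v None l = 1"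
| "fx v (Some a) l = f1 v l a"

lemma sel_None_iff: "sel p t = None \<longleftrightarrow> t \<notin> seldom p"
  by (cases p) auto

lemma seldom_sub: "p \<in> coords K v \<Longrightarrow> seldom p \<subseteq> {..<K}"
  by (auto simp: coords_def)

lemma sel_range: "p \<in> coords K v \<Longrightarrow> sel p t = Some a \<Longrightarrow> 1 \<le> a \<and> a \<le> v - 1"
  by (auto simp: coords_def split: if_splits)

lemma finite_seldom: "finite (seldom p)" by (cases p) auto

lemma card_seldom: "p \<in> coords K v \<Longrightarrow> card (seldom p) = (case p of Main _ _ \<Rightarrow> 1 | Int2 _ _ _ _ \<Rightarrow> 2 | Int3 _ _ _ _ _ _ \<Rightarrow> 3)"
  by (auto simp: coords_def)

lemma fvec_prod:
  assumes "p \<in> coords K v"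
  shows "fvec v i p = (\<Prod>t<K. fx v (sel p t) (i t))"
proof -
  have "(\<Prod>t<K. fx v (sel p t) (i t)) = (\<Prod>t\<in>seldom p. fx v (sel p t) (i t))"
    by (rule prod.mono_neutral_right) (use seldom_sub[OF assms] in \<open>auto simp: sel_None_iff[symmetric]\<close>)
  also have "\<dots> = fvec v i p" using assms by (cases p) (auto simp: coords_def)
  finally show ?thesis by simp
qed

definition SS1 :: "nat \<Rightarrow> nat set \<Rightarrow> nat set \<Rightarrow> coord \<Rightarrow> coord \<Rightarrow> nat \<Rightarrow> real" where
  "SS1 v A D p q t = (if t \<in> A then (if t \<in> D then (real v - 1) * (\<Sum>l\<in>{1..v}. fx v (sel p t) l * fx v (sel q t) l)
      else (\<Sum>l\<in>{1..v}. fx v (sel p t) l * fx v (sel q t) l)) else fx v (sel p t) 0 * fx v (sel q t) 0)"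

definition SS2 :: "nat \<Rightarrow> nat set \<Rightarrow> nat set \<Rightarrow> coord \<Rightarrow> coord \<Rightarrow> nat \<Rightarrow> real" where
  "SS2 v A D p q t = (if t \<in> A then (if t \<in> D then (\<Sum>l\<in>{1..v}. fx v (sel p t) l) * (\<Sum>l\<in>{1..v}. fx v (sel q t) l) - (\<Sum>l\<in>{1..v}. fx v (sel p t) l * fx v (sel q t) l)
      else (\<Sum>l\<in>{1..v}. fx v (sel p t) l * fx v (sel q t) l)) else fx v (sel p t) 0 * fx v (sel q t) 0)"

definition Fval :: "nat \<Rightarrow> coord \<Rightarrow> coord \<Rightarrow> profile \<times> profile \<Rightarrow> real" where
  "Fval v p q x = (fvec v (fst x) p - fvec v (snd x) p) * (fvec v (fst x) q - fvec v (snd x) q)"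

lemma sum_Y_F:
  assumes p: "p \<in> coords K v" and q: "q \<in> coords K v" and A: "A \<subseteq> {..<K}"
  shows "(\<Sum>x\<in>Ypairs v A D. Fval v p q x) = 2 * (\<Prod>t<K. SS1 v A D p q t) - 2 * (\<Prod>t<K. SS2 v A D p q t)"
proof -
  define g where "g t = fx v (sel p t)" for t
  define h where "h t = fx v (sel q t)" for t
  have F: "Fval v p q x = (\<Prod>t<K. g t (fst x t) * h t (fst x t)) - (\<Prod>t<K. g t (fst x t) * h t (snd x t))
        - (\<Prod>t<K. g t (snd x t) * h t (fst x t)) + (\<Prod>t<K. g t (snd x t) * h t (snd x t))" for x
    unfolding Fval_def fvec_prod[OF p] fvec_prod[OF q] g_def h_def
    by (simp add: prod.distrib algebra_simps)
  have e1: "(\<Sum>x\<in>Ypairs v A D. \<Prod>t<K. g t (fst x t) * h t (fst x t)) = (\<Prod>t<K. SS1 v A D p q t)"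
    using sum_Ypairs_prod[OF A, of "\<lambda>t z. g t (fst z) * h t (fst z)" v D]
    by (simp add: sum_LL_diag SS1_def g_def h_def)
  have e4: "(\<Sum>x\<in>Ypairs v A D. \<Prod>t<K. g t (snd x t) * h t (snd x t)) = (\<Prod>t<K. SS1 v A D p q t)"
    using sum_Ypairs_prod[OF A, of "\<lambda>t z. g t (snd z) * h t (snd z)" v D]
    by (simp add: sum_LL_diag SS1_def g_def h_def)
  have e2: "(\<Sum>x\<in>Ypairs v A D. \<Prod>t<K. g t (fst x t) * h t (snd x t)) = (\<Prod>t<K. SS2 v A D p q t)"
    using sum_Ypairs_prod[OF A, of "\<lambda>t z. g t (fst z) * h t (snd z)" v D]
    by (simp add: sum_LL_diag SS2_def g_def h_def)
  have e3: "(\<Sum>x\<in>Ypairs v A D. \<Prod>t<K. g t (snd x t) * h t (fst x t)) = (\<Prod>t<K. SS2 v A D p q t)"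
    using sum_Ypairs_prod[OF A, of "\<lambda>t z. g t (snd z) * h t (fst z)" v D]
    by (simp add: sum_LL_diag SS2_def g_def h_def)
  show ?thesis
    unfolding F by (simp add: sum.distrib sum_subtractf e1 e2 e3 e4)
qed

definition cc :: "coord \<Rightarrow> coord \<Rightarrow> nat \<Rightarrow> real" where
  "cc p q t = (if the (sel p t) = the (sel q t) then 1 else 0) + 1"

definition mm :: "nat \<Rightarrow> nat set \<Rightarrow> nat set \<Rightarrow> nat \<Rightarrow> real" where
  "mm v A D t = (if t \<in> A then (if t \<in> D then real v * real v - real v else real v) else 1)"

lemma fx_0: "fx v (sel p t) 0 = (if t \<in> seldom p then 0 else 1)"
  by (cases "sel p t") (auto simp: f1_def sel_None_iff[symmetric])

lemma sum_fx:
  assumes "p \<in> coords K v" "v \<ge> 2"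
  shows "(\<Sum>l\<in>{1..v}. fx v (sel p t) l) = (if t \<in> seldom p then 0 else real v)"
proof (cases "sel p t")
  case None
  then have "t \<notin> seldom p" using sel_None_iff by blast
  then show ?thesis using None by simp
next
  case (Some a)
  then have "t \<in> seldom p" by (metis option.distinct(1) sel_None_iff)
  moreover have "1 \<le> a" "a < v" using sel_range[OF assms(1) Some] assms(2) by auto
  ultimately show ?thesis using Some sum_f1 by simp
qed

lemma sum_fx2:
  assumes "p \<in> coords K v" "q \<in> coords K v" "v \<ge> 2"
  shows "(\<Sum>l\<in>{1..v}. fx v (sel p t) l * fx v (sel q t) l) =
    (if t \<in> seldom p then (if t \<in> seldom q then cc p q t else 0) else (if t \<in> seldom q then 0 else real v))"
proof (cases "sel p t")
  case None
  then have "t \<notin> seldom p" using sel_None_iff by blast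
  then show ?thesis using None sum_fx[OF assms(2,3), of t] by simp
next
  case (Some a)
  then have tp: "t \<in> seldom p" by (metis option.distinct(1) sel_None_iff)
  have a: "1 \<le> a" "a < v" using sel_range[OF assms(1) Some] assms(3) by auto
  show ?thesis
  proof (cases "sel q t")
    case None
    then have "t \<notin> seldom q" using sel_None_iff by blast
    then show ?thesis using None Some tp sum_f1[OF a] by simp
  next
    case (Some b)
    then have tq: "t \<in> seldom q" by (metis option.distinct(1) sel_None_iff)
    have b: "1 \<le> b" "b < v" using sel_range[OF assms(2) Some] assms(3) by auto
    show ?thesis using Some \<open>sel p t = Some a\<close> tp tq sum_f1f1[OF a b] by (simp add: cc_def)
  qed
qed

lemma SS_off:
  assumes "p \<in> coords K v" "q \<in> coords K v" "v \<ge> 2"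
    and "(t \<in> seldom p) \<noteq> (t \<in> seldom q)"
  shows "SS1 v A D p q t = 0" "SS2 v A D p q t = 0"
  using assms unfolding SS1_def SS2_def sum_fx2[OF assms(1-3)] sum_fx[OF assms(1,3)] sum_fx[OF assms(2,3)] fx_0 by auto

lemma SS_out:
  assumes "p \<in> coords K v" "q \<in> coords K v" "v \<ge> 2"
    and "t \<notin> seldom p" "t \<notin> seldom q"
  shows "SS1 v A D p q t = mm v A D t" "SS2 v A D p q t = mm v A D t"
  using assms unfolding SS1_def SS2_def mm_def sum_fx2[OF assms(1-3)] sum_fx[OF assms(1,3)] sum_fx[OF assms(2,3)] fx_0 by (auto simp: algebra_simps)

lemma SS_in:
  assumes "p \<in> coords K v" "q \<in> coords K v" "v \<ge> 2"
    and "t \<in> seldom p" "t \<in> seldom q"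
  shows "SS1 v A D p q t = (if t \<in> A then mm v A D t * cc p q t / real v else 0)"
    "SS2 v A D p q t = (if t \<in> A then mm v A D t * cc p q t * (if t \<in> D then - 1 / (real v * (real v - 1)) else 1 / real v) else 0)"
proof -
  have v: "real v \<noteq> 0" "real v - 1 \<noteq> 0" using assms(3) by auto
  show "SS1 v A D p q t = (if t \<in> A then mm v A D t * cc p q t / real v else 0)"
    using assms v unfolding SS1_def mm_def sum_fx2[OF assms(1-3)] fx_0 by (auto simp: field_simps)
  show "SS2 v A D p q t = (if t \<in> A then mm v A D t * cc p q t * (if t \<in> D then - 1 / (real v * (real v - 1)) else 1 / real v) else 0)"
    using assms v unfolding SS2_def mm_def sum_fx2[OF assms(1-3)] sum_fx[OF assms(1,3)] sum_fx[OF assms(2,3)] fx_0 by (auto simp: field_simps)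
qed

lemma sum_Y_off:
  assumes p: "p \<in> coords K v" and q: "q \<in> coords K v" and v: "v \<ge> 2" and A: "A \<subseteq> {..<K}"
    and ne: "seldom p \<noteq> seldom q"
  shows "(\<Sum>x\<in>Ypairs v A D. Fval v p q x) = 0"
proof -
  obtain t where t: "(t \<in> seldom p) \<noteq> (t \<in> seldom q)" using ne by blast
  then have tK: "t \<in> {..<K}" using seldom_sub[OF p] seldom_sub[OF q] by blast
  have z1: "(\<Prod>t<K. SS1 v A D p q t) = 0" using SS_off[OF p q v t] tK by (meson prod_zero finite_lessThan)
  have z2: "(\<Prod>t<K. SS2 v A D p q t) = 0" using SS_off[OF p q v t] tK by (meson prod_zero finite_lessThan)
  show ?thesis unfolding sum_Y_F[OF p q A] z1 z2 by simp
qed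

definition Gfun :: "nat \<Rightarrow> nat set \<Rightarrow> nat set \<Rightarrow> coord \<Rightarrow> coord \<Rightarrow> real" where
  "Gfun v A D p q = (if seldom p \<subseteq> A then 2 * (\<Prod>t\<in>seldom p. cc p q t) *
     ((1 / real v) ^ card (seldom p) - (1 / real v) ^ card (seldom p - D) * (- 1 / (real v * (real v - 1))) ^ card (seldom p \<inter> D)) else 0)"

lemma sum_Y_diag:
  assumes p: "p \<in> coords K v" and q: "q \<in> coords K v" and v: "v \<ge> 2" and A: "A \<subseteq> {..<K}"
    and eq: "seldom p = seldom q"
  shows "(\<Sum>x\<in>Ypairs v A D. Fval v p q x) = (\<Prod>t<K. mm v A D t) * Gfun v A D p q"
proof -
  define T where "T = seldom p"
  have TK: "T \<subseteq> {..<K}" using seldom_sub[OF p] by (simp add: T_def)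
  have fT: "finite T" by (simp add: T_def finite_seldom)
  have split: "(\<Prod>t<K. f t) = (\<Prod>t\<in>{..<K} - T. f t) * (\<Prod>t\<in>T. f t)" for f :: "nat \<Rightarrow> real"
    using TK by (simp add: prod.subset_diff)
  have rest1: "(\<Prod>t\<in>{..<K} - T. SS1 v A D p q t) = (\<Prod>t\<in>{..<K} - T. mm v A D t)"
    using SS_out[OF p q v] eq by (intro prod.cong) (auto simp: T_def)
  have rest2: "(\<Prod>t\<in>{..<K} - T. SS2 v A D p q t) = (\<Prod>t\<in>{..<K} - T. mm v A D t)"
    using SS_out[OF p q v] eq by (intro prod.cong) (auto simp: T_def)
  show ?thesis
  proof (cases "T \<subseteq> A")
    case True
    have in1: "(\<Prod>t\<in>T. SS1 v A D p q t) = (\<Prod>t\<in>T. mm v A D t) * (\<Prod>t\<in>T. cc p q t) * (1 / real v) ^ card T"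
    proof -
      have "(\<Prod>t\<in>T. SS1 v A D p q t) = (\<Prod>t\<in>T. mm v A D t * cc p q t * (1 / real v))"
        using SS_in[OF p q v] eq True by (intro prod.cong) (auto simp: T_def)
      also have "\<dots> = (\<Prod>t\<in>T. mm v A D t) * (\<Prod>t\<in>T. cc p q t) * (1 / real v) ^ card T"
        by (simp only: prod.distrib prod_constant)
      finally show ?thesis .
    qed
    have in2: "(\<Prod>t\<in>T. SS2 v A D p q t) = (\<Prod>t\<in>T. mm v A D t) * (\<Prod>t\<in>T. cc p q t) *
        ((1 / real v) ^ card (T - D) * (- 1 / (real v * (real v - 1))) ^ card (T \<inter> D))"
    proof -
      have "(\<Prod>t\<in>T. SS2 v A D p q t) = (\<Prod>t\<in>T. mm v A D t * cc p q t * (if t \<in> D then - 1 / (real v * (real v - 1)) else 1 / real v))"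
        using SS_in[OF p q v] eq True by (intro prod.cong) (auto simp: T_def)
      also have "\<dots> = (\<Prod>t\<in>T. mm v A D t) * (\<Prod>t\<in>T. cc p q t) * (\<Prod>t\<in>T. (if t \<in> D then - 1 / (real v * (real v - 1)) else 1 / real v))"
        by (simp only: prod.distrib)
      also have "(\<Prod>t\<in>T. (if t \<in> D then - 1 / (real v * (real v - 1)) else 1 / real v)) =
          (- 1 / (real v * (real v - 1))) ^ card (T \<inter> D) * (1 / real v) ^ card (T - D)"
        using fT by (simp add: prod.If_cases Diff_eq)
      finally show ?thesis by (simp add: mult_ac)
    qed
    show ?thesis
      unfolding sum_Y_F[OF p q A] split[of "SS1 v A D p q"] split[of "SS2 v A D p q"] split[of "mm v A D"] rest1 rest2 in1 in2
      using True by (simp add: Gfun_def T_def[symmetric] algebra_simps)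
  next
    case False
    then obtain t where t: "t \<in> T" "t \<notin> A" by blast
    have z1: "(\<Prod>t\<in>T. SS1 v A D p q t) = 0"
      using SS_in(1)[OF p q v, of t A D] t eq fT by (intro prod_zero) (auto simp: T_def)
    have z2: "(\<Prod>t\<in>T. SS2 v A D p q t) = 0"
      using SS_in(2)[OF p q v, of t A D] t eq fT by (intro prod_zero) (auto simp: T_def)
    show ?thesis
      unfolding sum_Y_F[OF p q A] split[of "SS1 v A D p q"] split[of "SS2 v A D p q"] z1 z2
      using False by (simp add: Gfun_def T_def[symmetric])
  qed
qed

lemma prod_mm:
  assumes "(A,D) \<in> AD K S d"
  shows "(\<Prod>t<K. mm v A D t) = (real v * real v - real v) ^ d * real v ^ (S - d)"
proof -
  have A: "A \<subseteq> {..<K}" "card A = S" "D \<subseteq> A" "card D = d" using assms by (auto simp: AD_def)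
  have fA: "finite A" using A(1) finite_subset by blast
  have "(\<Prod>t<K. mm v A D t) = (\<Prod>t\<in>A. mm v A D t)"
    using A(1) by (intro prod.mono_neutral_right) (auto simp: mm_def)
  also have "\<dots> = (\<Prod>t\<in>A. if t \<in> D then real v * real v - real v else real v)"
    by (intro prod.cong) (auto simp: mm_def)
  also have "\<dots> = (real v * real v - real v) ^ card (A \<inter> D) * real v ^ card (A - D)"
    using fA by (simp add: prod.If_cases Diff_eq)
  also have "A \<inter> D = D" using A by auto
  also have "card (A - D) = S - d" using A fA by (simp add: card_Diff_subset finite_subset)
  finally show ?thesis using A by simp
qed

lemma card_Ypairs:
  assumes "A \<subseteq> {..<K}"
  shows "real (card (Ypairs v A D)) = (\<Prod>t<K. mm v A D t)"
proof -
  have "real (card (Ypairs v A D)) = (\<Sum>x\<in>Ypairs v A D. \<Prod>t<K. (\<lambda>t z. 1::real) t (fst x t, snd x t))"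
    by simp
  also have "\<dots> = (\<Prod>t<K. \<Sum>z\<in>LL v A D t. 1::real)" by (rule sum_Ypairs_prod[OF assms])
  also have "\<dots> = (\<Prod>t<K. mm v A D t)"
  proof (intro prod.cong refl)
    fix t
    have "v \<le> v * v" by (cases v) auto
    then show "(\<Sum>z\<in>LL v A D t. 1::real) = mm v A D t"
      by (simp add: card_LL mm_def of_nat_diff)
  qed
  finally show ?thesis .
qed

lemma info_formula:
  assumes p: "p \<in> coords K v" and q: "q \<in> coords K v" and v: "v \<ge> 2"
    and ADne: "card (AD K S d) > 0"
  shows "info_matrix v (uniform_design K v S d) p q =
     (if seldom p = seldom q then (\<Sum>(A,D)\<in>AD K S d. Gfun v A D p q) / real (card (AD K S d)) else 0)"
proof -
  define X where "X = design_region_d K v S d"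
  define N0 where "N0 = (real v * real v - real v) ^ d * real v ^ (S - d)"
  have N0: "N0 > 0"
  proof -
    have "real v * real v - real v > 0" using v by (simp add: algebra_simps)
    then show ?thesis unfolding N0_def using v by simp
  qed
  have ADsub: "\<And>A D. (A,D) \<in> AD K S d \<Longrightarrow> A \<subseteq> {..<K}" by (auto simp: AD_def)
  have fX: "finite X" by (simp add: X_def finite_design)
  have cardX: "real (card X) = real (card (AD K S d)) * N0"
  proof -
    have "real (card X) = (\<Sum>x\<in>X. 1::real)" by simp
    also have "\<dots> = (\<Sum>(A,D)\<in>AD K S d. \<Sum>x\<in>Ypairs v A D. 1::real)" unfolding X_def by (rule sum_design)
    also have "\<dots> = (\<Sum>(A,D)\<in>AD K S d. N0)"
    proof (intro sum.cong refl, clarify)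
      fix A D assume m: "(A,D) \<in> AD K S d"
      have "(\<Sum>x\<in>Ypairs v A D. 1::real) = real (card (Ypairs v A D))" by simp
      also have "\<dots> = N0" using card_Ypairs[OF ADsub[OF m]] prod_mm[OF m] by (simp add: N0_def)
      finally show "(\<Sum>x\<in>Ypairs v A D. 1::real) = N0" .
    qed
    finally show ?thesis by simp
  qed
  have Xne: "X \<noteq> {}" using cardX N0 ADne by (auto)
  have info: "info_matrix v (uniform_design K v S d) p q = (\<Sum>x\<in>X. Fval v p q x) / real (card X)"
    unfolding info_matrix_def uniform_design_def X_def[symmetric] Fval_def
    using fX Xne by (simp add: sum_divide_distrib)
  have sumX: "(\<Sum>x\<in>X. Fval v p q x) = (\<Sum>(A,D)\<in>AD K S d. \<Sum>x\<in>Ypairs v A D. Fval v p q x)"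
    unfolding X_def by (rule sum_design)
  show ?thesis
  proof (cases "seldom p = seldom q")
    case True
    have "(\<Sum>x\<in>X. Fval v p q x) = (\<Sum>(A,D)\<in>AD K S d. N0 * Gfun v A D p q)"
      unfolding sumX by (intro sum.cong refl) (auto simp: sum_Y_diag[OF p q v ADsub True] prod_mm N0_def)
    also have "\<dots> = N0 * (\<Sum>(A,D)\<in>AD K S d. Gfun v A D p q)"
      by (simp add: sum_distrib_left case_prod_unfold)
    finally show ?thesis using True N0 unfolding info cardX by simp
  next
    case False
    have "(\<Sum>x\<in>X. Fval v p q x) = 0"
      unfolding sumX by (intro sum.neutral) (auto simp: sum_Y_off[OF p q v ADsub False])
    then show ?thesis using False unfolding info by simp
  qed
qed

lemma count2:
  assumes "finite X"
  shows "card {(A,D). A \<subseteq> X \<and> card A = m \<and> D \<subseteq> A \<and> card D = n} = (card X choose m) * (m choose n)"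
proof -
  have eq: "{(A,D). A \<subseteq> X \<and> card A = m \<and> D \<subseteq> A \<and> card D = n} = Sigma {A. A \<subseteq> X \<and> card A = m} (\<lambda>A. {D. D \<subseteq> A \<and> card D = n})"
    by auto
  have fin: "finite {A. A \<subseteq> X \<and> card A = m}" using assms by auto
  have "card (Sigma {A. A \<subseteq> X \<and> card A = m} (\<lambda>A. {D. D \<subseteq> A \<and> card D = n})) = (\<Sum>A\<in>{A. A \<subseteq> X \<and> card A = m}. card {D. D \<subseteq> A \<and> card D = n})"
  proof (intro card_SigmaI fin ballI)
    fix A assume "A \<in> {A. A \<subseteq> X \<and> card A = m}"
    then have "finite A" using assms finite_subset by blast
    moreover have "{D. D \<subseteq> A \<and> card D = n} \<subseteq> Pow A" by auto
    ultimately show "finite {D. D \<subseteq> A \<and> card D = n}" by (meson finite_Pow_iff finite_subset)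
  qed
  also have "\<dots> = (\<Sum>A\<in>{A. A \<subseteq> X \<and> card A = m}. m choose n)"
    using assms by (intro sum.cong refl) (auto simp: n_subsets finite_subset)
  also have "\<dots> = (card X choose m) * (m choose n)" using assms by (simp add: n_subsets)
  finally show ?thesis using eq by simp
qed

lemma count_pattern:
  assumes T: "T \<subseteq> {..<K}" and B: "B \<subseteq> T" and tS: "card T \<le> S"
  shows "card {x \<in> AD K S d. T \<subseteq> fst x \<and> snd x \<inter> T = B} =
     (if card B \<le> d then (K - card T choose (S - card T)) * (S - card T choose (d - card B)) else 0)"
proof -
  have fT: "finite T" using T finite_subset by blast
  have fB: "finite B" using B fT finite_subset by blast
  define Tgt where "Tgt = {x \<in> AD K S d. T \<subseteq> fst x \<and> snd x \<inter> T = B}"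
  show ?thesis
  proof (cases "card B \<le> d")
    case False
    have "Tgt = {}"
    proof (rule ccontr)
      assume "Tgt \<noteq> {}"
      then obtain A D where m: "(A,D) \<in> AD K S d" "T \<subseteq> A" "D \<inter> T = B" by (auto simp: Tgt_def)
      then have "finite D" "card D = d" by (auto simp: AD_def intro: finite_subset)
      then have "card B \<le> d" using m(3) by (metis card_mono inf_le1)
      then show False using False by simp
    qed
    then show ?thesis using False unfolding Tgt_def[symmetric] by simp
  next
    case True
    define P where "P = {(A,D). A \<subseteq> {..<K} - T \<and> card A = S - card T \<and> D \<subseteq> A \<and> card D = d - card B}"
    define f where "f = (\<lambda>(A,D). (A \<union> T, D \<union> B))"
    have cardP: "card P = (K - card T choose (S - card T)) * (S - card T choose (d - card B))"
      unfolding P_def using count2[of "{..<K} - T" "S - card T" "d - card B"] T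
      by (simp add: card_Diff_subset fT)
    have inj: "inj_on f P"
    proof (rule inj_onI, clarify)
      fix A D A' D' assume m: "(A,D) \<in> P" "(A',D') \<in> P" and e: "f (A,D) = f (A',D')"
      have d: "A \<inter> T = {}" "A' \<inter> T = {}" "D \<inter> T = {}" "D' \<inter> T = {}" using m by (auto simp: P_def)
      have "A \<union> T = A' \<union> T" "D \<union> B = D' \<union> B" using e by (auto simp: f_def)
      then show "A = A' \<and> D = D'" using d B by blast
    qed
    have img: "f ` P = Tgt"
    proof
      show "f ` P \<subseteq> Tgt"
      proof
        fix y assume "y \<in> f ` P"
        then obtain A D where m: "(A,D) \<in> P" and y: "y = f (A,D)" by auto
        have A: "A \<subseteq> {..<K} - T" "card A = S - card T" "D \<subseteq> A" "card D = d - card B" using m by (auto simp: P_def)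
        have fA: "finite A" using A(1) finite_subset by blast
        have fD: "finite D" using A(3) fA finite_subset by blast
        have "card (A \<union> T) = S" using A fA fT tS by (subst card_Un_disjoint) auto
        moreover have "card (D \<union> B) = d" using A fD fB B True by (subst card_Un_disjoint) auto
        moreover have "(D \<union> B) \<inter> T = B" using A B by auto
        ultimately show "y \<in> Tgt" unfolding y using A T B by (auto simp: f_def Tgt_def AD_def)
      qed
      show "Tgt \<subseteq> f ` P"
      proof
        fix y assume "y \<in> Tgt"
        moreover obtain A D where y: "y = (A,D)" by (cases y)
        ultimately have m: "(A,D) \<in> Tgt" by simp
        have A: "A \<subseteq> {..<K}" "card A = S" "D \<subseteq> A" "card D = d" "T \<subseteq> A" "D \<inter> T = B"
          using m by (auto simp: Tgt_def AD_def)
        have fA: "finite A" using A(1) finite_subset by blast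
        have fD: "finite D" using A(3) fA finite_subset by blast
        have "(A - T, D - T) \<in> P"
          using A fA fD fT by (auto simp: P_def card_Diff_subset card_Diff_subset_Int)
        moreover have "f (A - T, D - T) = (A, D)" using A by (auto simp: f_def)
        ultimately show "y \<in> f ` P" unfolding y by force
      qed
    qed
    have "card Tgt = card P" using card_image[OF inj] img by simp
    then show ?thesis using True cardP by (simp add: Tgt_def)
  qed
qed

lemma card_AD: "S \<le> K \<Longrightarrow> card (AD K S d) = (K choose S) * (S choose d)"
proof -
  have "AD K S d = {x \<in> AD K S d. {} \<subseteq> fst x \<and> snd x \<inter> {} = {}}" by auto
  then show "S \<le> K \<Longrightarrow> ?thesis" using count_pattern[of "{}" K "{}" S d] by simp
qed

lemma sum_Pow_card:
  fixes f :: "nat \<Rightarrow> real"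
  assumes "finite T"
  shows "(\<Sum>B\<in>Pow T. f (card B)) = (\<Sum>b\<le>card T. real (card T choose b) * f b)"
proof -
  have "(\<Sum>B\<in>Pow T. f (card B)) = (\<Sum>b\<le>card T. \<Sum>B\<in>{B \<in> Pow T. card B = b}. f (card B))"
    using assms by (intro sum.group[symmetric]) (auto simp: card_mono)
  also have "\<dots> = (\<Sum>b\<le>card T. real (card T choose b) * f b)"
  proof (intro sum.cong refl)
    fix b
    have "{B \<in> Pow T. card B = b} = {B. B \<subseteq> T \<and> card B = b}" by auto
    then have "card {B \<in> Pow T. card B = b} = card T choose b" using n_subsets[OF assms] by simp
    moreover have "(\<Sum>B\<in>{B \<in> Pow T. card B = b}. f (card B)) = (\<Sum>B\<in>{B \<in> Pow T. card B = b}. f b)"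
      by (intro sum.cong) auto
    ultimately show "(\<Sum>B\<in>{B \<in> Pow T. card B = b}. f (card B)) = real (card T choose b) * f b" by simp
  qed
  finally show ?thesis .
qed

lemma sum_Gfun:
  fixes gam :: "nat \<Rightarrow> real"
  assumes T: "T \<subseteq> {..<K}" and tS: "card T \<le> S"
    and G: "\<And>A D. (A,D) \<in> AD K S d \<Longrightarrow> G A D = (if T \<subseteq> A then gam (card (D \<inter> T)) else 0)"
  shows "(\<Sum>(A,D)\<in>AD K S d. G A D) = (\<Sum>b\<le>card T. real (card T choose b) * (gam b *
      real (if b \<le> d then (K - card T choose (S - card T)) * (S - card T choose (d - b)) else 0)))"
proof -
  have fT: "finite T" using T finite_subset by blast
  define cnt where "cnt b = real (if b \<le> d then (K - card T choose (S - card T)) * (S - card T choose (d - b)) else 0)" for b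
  have "(\<Sum>(A,D)\<in>AD K S d. G A D) = (\<Sum>x\<in>AD K S d. if T \<subseteq> fst x then gam (card (snd x \<inter> T)) else 0)"
    by (intro sum.cong refl) (clarsimp simp: G)
  also have "\<dots> = (\<Sum>B\<in>Pow T. \<Sum>x\<in>{x \<in> AD K S d. snd x \<inter> T = B}. if T \<subseteq> fst x then gam (card (snd x \<inter> T)) else 0)"
    using fT finite_AD by (intro sum.group[symmetric, where g="\<lambda>x. snd x \<inter> T"]) auto
  also have "\<dots> = (\<Sum>B\<in>Pow T. gam (card B) * cnt (card B))"
  proof (intro sum.cong refl)
    fix B assume B: "B \<in> Pow T"
    have "(\<Sum>x\<in>{x \<in> AD K S d. snd x \<inter> T = B}. if T \<subseteq> fst x then gam (card (snd x \<inter> T)) else 0)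
        = (\<Sum>x\<in>{x \<in> AD K S d. snd x \<inter> T = B}. if T \<subseteq> fst x then gam (card B) else 0)"
      by (intro sum.cong) auto
    also have "\<dots> = gam (card B) * real (card {x \<in> {x \<in> AD K S d. snd x \<inter> T = B}. T \<subseteq> fst x})"
      using finite_AD by (simp add: sum.inter_filter[symmetric])
    also have "{x \<in> {x \<in> AD K S d. snd x \<inter> T = B}. T \<subseteq> fst x} = {x \<in> AD K S d. T \<subseteq> fst x \<and> snd x \<inter> T = B}"
      by auto
    also have "real (card \<dots>) = cnt (card B)"
      using count_pattern[OF T _ tS, of B d] B by (simp add: cnt_def)
    finally show "(\<Sum>x\<in>{x \<in> AD K S d. snd x \<inter> T = B}. if T \<subseteq> fst x then gam (card (snd x \<inter> T)) else 0) = gam (card B) * cnt (card B)" .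
  qed
  also have "\<dots> = (\<Sum>b\<le>card T. real (card T choose b) * (gam b * cnt b))"
    by (rule sum_Pow_card[OF fT])
  finally show ?thesis by (simp add: cnt_def)
qed

definition ff :: "nat \<Rightarrow> nat \<Rightarrow> real" where
  "ff n j = (\<Prod>i<j. real n - real i)"

lemma ff_zero: "n < j \<Longrightarrow> ff n j = 0"
  unfolding ff_def by (rule prod_zero) auto

lemma ff_fact: "j \<le> n \<Longrightarrow> (fact n :: real) = ff n j * fact (n - j)"
proof (induction j)
  case 0 then show ?case by (simp add: ff_def)
next
  case (Suc j)
  then have IH: "(fact n :: real) = ff n j * fact (n - j)" by simp
  have "n - j = Suc (n - Suc j)" using Suc.prems by simp
  then have "(fact (n - j) :: real) = real (n - j) * fact (n - Suc j)" by simp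
  moreover have "ff n (Suc j) = ff n j * (real n - real j)" by (simp add: ff_def)
  moreover have "real (n - j) = real n - real j" using Suc.prems by simp
  ultimately show ?case using IH by (simp add: mult_ac)
qed

lemma binom_real: "k \<le> n \<Longrightarrow> (fact k :: real) * fact (n - k) * real (n choose k) = fact n"
  using binomial_fact_lemma[of k n] by (metis of_nat_fact of_nat_mult)

lemma cnt_ff:
  assumes "t \<le> S" "S \<le> K" "d \<le> S" "b \<le> t"
  shows "real (if b \<le> d then (K - t choose (S - t)) * (S - t choose (d - b)) else 0) * ff K t =
         real (K choose S) * real (S choose d) * ff d b * ff (S - d) (t - b)"
proof (cases "b \<le> d")
  case False then show ?thesis by (simp add: ff_zero)
next
  case True
  show ?thesis
  proof (cases "t - b \<le> S - d")
    case False
    then have "S - t < d - b" using assms True by linarith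
    then show ?thesis using True False by (simp add: ff_zero)
  next
    case r: True
    define r where "r = S - d - (t - b)"
    have r2: "S - t - (d - b) = r" using assms True r by (simp add: r_def)
    have e1: "(fact (S - t) :: real) * fact (K - S) * real (K - t choose (S - t)) = fact (K - t)"
      using binom_real[of "S - t" "K - t"] assms by (simp add: algebra_simps)
    have e2: "(fact (d - b) :: real) * fact r * real (S - t choose (d - b)) = fact (S - t)"
      using binom_real[of "d - b" "S - t"] assms True r r2 by simp
    have e3: "(fact S :: real) * fact (K - S) * real (K choose S) = fact K"
      using binom_real[of S K] assms by simp
    have e4: "(fact d :: real) * fact (S - d) * real (S choose d) = fact S"
      using binom_real[of d S] assms by simp
    have f1: "(fact K :: real) = ff K t * fact (K - t)" using ff_fact[of t K] assms by simp
    have f2: "(fact d :: real) = ff d b * fact (d - b)" using ff_fact[of b d] True by simp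
    have f3: "(fact (S - d) :: real) = ff (S - d) (t - b) * fact r" using ff_fact[of "t - b" "S - d"] r by (simp add: r_def)
    define M where "M = (fact (K - S) :: real) * fact (d - b) * fact r * fact (S - t)"
    have M: "M \<noteq> 0" by (simp add: M_def)
    have "real (K - t choose (S - t)) * real (S - t choose (d - b)) * ff K t * M = fact K * fact (S - t)"
    proof -
      have "real (K - t choose (S - t)) * real (S - t choose (d - b)) * ff K t * M
          = (fact (S - t) * fact (K - S) * real (K - t choose (S - t))) * (fact (d - b) * fact r * real (S - t choose (d - b))) * ff K t"
        by (simp add: M_def mult_ac)
      also have "\<dots> = fact K * fact (S - t)" unfolding e1 e2 f1 by (simp add: mult_ac)
      finally show ?thesis .
    qed
    moreover have "real (K choose S) * real (S choose d) * ff d b * ff (S - d) (t - b) * M = fact K * fact (S - t)"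
    proof -
      have "real (K choose S) * real (S choose d) * ff d b * ff (S - d) (t - b) * M
          = (fact (K - S) * real (K choose S)) * ((ff d b * fact (d - b)) * (ff (S - d) (t - b) * fact r) * real (S choose d)) * fact (S - t)"
        by (simp add: M_def mult_ac)
      also have "\<dots> = (fact (K - S) * real (K choose S)) * fact S * fact (S - t)"
        unfolding f2[symmetric] f3[symmetric] e4 by simp
      also have "\<dots> = fact K * fact (S - t)" using e3 by (simp add: mult_ac)
      finally show ?thesis .
    qed
    ultimately have "real (K - t choose (S - t)) * real (S - t choose (d - b)) * ff K t * M =
        real (K choose S) * real (S choose d) * ff d b * ff (S - d) (t - b) * M" by simp
    then show ?thesis using True M by (simp only: if_True of_nat_mult) (metis mult_right_cancel)
  qed
qed

lemma ff_pos: "j \<le> n \<Longrightarrow> ff n j > 0"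
  unfolding ff_def by (rule prod_pos) auto

lemma info_diag:
  assumes p: "p \<in> coords K v" and q: "q \<in> coords K v" and v: "v \<ge> 2"
    and eq: "seldom p = seldom q" and SK: "S \<le> K" and dS: "d \<le> S" and tS: "card (seldom p) \<le> S"
  shows "info_matrix v (uniform_design K v S d) p q =
    (\<Sum>b\<le>card (seldom p). real (card (seldom p) choose b) *
       (2 * (\<Prod>t\<in>seldom p. cc p q t) * ((1 / real v) ^ card (seldom p) - (1 / real v) ^ (card (seldom p) - b) * (- 1 / (real v * (real v - 1))) ^ b))
       * ff d b * ff (S - d) (card (seldom p) - b)) / ff K (card (seldom p))"
proof -
  define T where "T = seldom p"
  define t where "t = card T"
  define gam where "gam b = 2 * (\<Prod>t\<in>T. cc p q t) * ((1 / real v) ^ t - (1 / real v) ^ (t - b) * (- 1 / (real v * (real v - 1))) ^ b)" for b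
  have TK: "T \<subseteq> {..<K}" using seldom_sub[OF p] by (simp add: T_def)
  have fT: "finite T" by (simp add: T_def finite_seldom)
  define N where "N = real (K choose S) * real (S choose d)"
  have cardAD: "real (card (AD K S d)) = N" using card_AD[OF SK] by (simp add: N_def)
  have Npos: "N > 0" using SK dS by (simp add: N_def)
  have ADpos: "card (AD K S d) > 0" using cardAD Npos by simp
  have tK: "t \<le> K" using tS SK by (simp add: t_def T_def)
  have ffK: "ff K t > 0" using ff_pos[OF tK] .
  have tS': "card T \<le> S" using tS by (simp add: T_def)
  have G: "Gfun v A D p q = (if T \<subseteq> A then gam (card (D \<inter> T)) else 0)" for A D
  proof -
    have "card (T - D) = t - card (D \<inter> T)" using fT by (simp add: t_def card_Diff_subset_Int Int_commute)
    moreover have "card (T \<inter> D) = card (D \<inter> T)" by (simp add: Int_commute)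
    ultimately show ?thesis by (simp add: Gfun_def gam_def T_def[symmetric] t_def)
  qed
  have "info_matrix v (uniform_design K v S d) p q = (\<Sum>(A,D)\<in>AD K S d. Gfun v A D p q) / N"
    using info_formula[OF p q v ADpos] eq cardAD by simp
  also have "(\<Sum>(A,D)\<in>AD K S d. Gfun v A D p q) = (\<Sum>b\<le>t. real (t choose b) * (gam b *
      real (if b \<le> d then (K - t choose (S - t)) * (S - t choose (d - b)) else 0)))"
    unfolding t_def by (rule sum_Gfun[where G="\<lambda>A D. Gfun v A D p q" and gam=gam and d=d, OF TK tS' G])
  also have "\<dots> = (\<Sum>b\<le>t. real (t choose b) * (gam b * (N * ff d b * ff (S - d) (t - b) / ff K t)))"
  proof (intro sum.cong refl)
    fix b assume "b \<in> {..t}"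
    then have "b \<le> t" by simp
    then have "real (if b \<le> d then (K - t choose (S - t)) * (S - t choose (d - b)) else 0) = N * ff d b * ff (S - d) (t - b) / ff K t"
      using cnt_ff[of t S K d b] tS SK dS ffK by (simp add: N_def t_def T_def field_simps)
    then show "real (t choose b) * (gam b * real (if b \<le> d then (K - t choose (S - t)) * (S - t choose (d - b)) else 0)) =
        real (t choose b) * (gam b * (N * ff d b * ff (S - d) (t - b) / ff K t))" by simp
  qed
  also have "(\<Sum>b\<le>t. real (t choose b) * (gam b * (N * ff d b * ff (S - d) (t - b) / ff K t))) =
      N * (\<Sum>b\<le>t. real (t choose b) * gam b * ff d b * ff (S - d) (t - b)) / ff K t"
    by (simp add: sum_distrib_left sum_divide_distrib mult_ac)
  finally have "info_matrix v (uniform_design K v S d) p q = (\<Sum>b\<le>t. real (t choose b) * gam b * ff d b * ff (S - d) (t - b)) / ff K t"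
    using Npos by simp
  then show ?thesis unfolding gam_def t_def T_def .
qed

lemma ff_small: "ff n 0 = 1" "ff n 1 = real n" "ff n 2 = real n * (real n - 1)"
  "ff n 3 = real n * (real n - 1) * (real n - 2)"
  by (simp_all add: ff_def numeral_3_eq_3 numeral_2_eq_2 lessThan_Suc)

lemma ff_Suc_small: "ff n (Suc 0) = real n" "ff n (Suc (Suc 0)) = real n * (real n - 1)"
  "ff n (Suc (Suc (Suc 0))) = real n * (real n - 1) * (real n - 2)"
  by (simp_all add: ff_def lessThan_Suc)

lemma sum_le3: "(\<Sum>b\<le>(3::nat). f b) = f 0 + f 1 + f 2 + (f 3 :: real)"
  by (simp add: numeral_3_eq_3 numeral_2_eq_2 atMost_Suc add_ac)
lemma sum_le2: "(\<Sum>b\<le>(2::nat). f b) = f 0 + f 1 + (f 2 :: real)"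
  by (simp add: numeral_2_eq_2 atMost_Suc add_ac)
lemma sum_le1: "(\<Sum>b\<le>(1::nat). f b) = f 0 + (f 1 :: real)"
  by (simp add: atMost_Suc add_ac)

lemma binom_small: "(3::nat) choose 1 = 3" "(3::nat) choose 2 = 3" "(3::nat) choose 3 = 1"
  "(2::nat) choose 1 = 2" "(2::nat) choose 2 = 1"
  by (simp_all add: numeral_3_eq_3 numeral_2_eq_2)

lemma seldom_eq_cases:
  assumes p: "p \<in> coords K v" and q: "q \<in> coords K v" and eq: "seldom p = seldom q"
  shows "(\<exists>k a a'. p = Main k a \<and> q = Main k a') \<or>
         (\<exists>k l a b a' b'. p = Int2 k l a b \<and> q = Int2 k l a' b') \<or>
         (\<exists>k l m a b c a' b' c'. p = Int3 k l m a b c \<and> q = Int3 k l m a' b' c')"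
proof -
  have cp: "(case p of Main _ _ \<Rightarrow> 1 | Int2 _ _ _ _ \<Rightarrow> 2 | Int3 _ _ _ _ _ _ \<Rightarrow> (3::nat)) =
      (case q of Main _ _ \<Rightarrow> 1 | Int2 _ _ _ _ \<Rightarrow> 2 | Int3 _ _ _ _ _ _ \<Rightarrow> 3)"
    using eq card_seldom[OF p] card_seldom[OF q] by simp
  show ?thesis
  proof (cases p)
    case (Main k a)
    then show ?thesis using q eq cp by (cases q) auto
  next
    case (Int2 k l a b)
    then show ?thesis using p q eq cp
    proof (cases q)
      case (Int2 k' l' a' b')
      with \<open>p = Int2 k l a b\<close> p q eq have "k < l" "k' < l'" "{k,l} = {k',l'}" by (auto simp: coords_def)
      then have "k = k' \<and> l = l'" by (metis doubleton_eq_iff not_less_iff_gr_or_eq)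
      then show ?thesis using \<open>p = Int2 k l a b\<close> Int2 by auto
    qed (use cp in auto)
  next
    case (Int3 k l m a b c)
    then show ?thesis using p q eq cp
    proof (cases q)
      case (Int3 k' l' m' a' b' c')
      with \<open>p = Int3 k l m a b c\<close> p q eq have o: "k < l" "l < m" "k' < l'" "l' < m'" and s: "{k,l,m} = {k',l',m'}"
        by (auto simp: coords_def)
      have "k = k'" using o s by (metis insertCI insertE less_asym' empty_iff order.strict_trans)
      moreover have "m = m'" using o s by (metis insertCI insertE less_asym' empty_iff order.strict_trans)
      moreover have "l = l'" using o s \<open>k = k'\<close> \<open>m = m'\<close> by (metis insertCI insertE less_irrefl empty_iff)
      ultimately show ?thesis using \<open>p = Int3 k l m a b c\<close> Int3 by auto
    qed (use cp in auto)
  qed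
qed

lemma block_off: "seldom p \<noteq> seldom q \<Longrightarrow> block_matrix K v S d p q = 0"
  by (cases p; cases q) auto

definition gm :: "nat \<Rightarrow> nat \<Rightarrow> nat \<Rightarrow> real" where
  "gm v t b = (1 / real v) ^ t - (1 / real v) ^ (t - b) * (- 1 / (real v * (real v - 1))) ^ b"

lemma gm_vals:
  assumes "v \<ge> 2"
  shows "gm v t 0 = 0"
    "gm v 1 1 = 1 / (real v - 1)"
    "gm v 2 1 = 1 / (real v * (real v - 1))"
    "gm v 2 2 = (real v - 2) / (real v * (real v - 1)^2)"
    "gm v 3 1 = 1 / (real v ^ 2 * (real v - 1))"
    "gm v 3 2 = (real v - 2) / (real v ^ 2 * (real v - 1)^2)"
    "gm v 3 3 = (real v ^ 2 - 3 * real v + 3) / (real v ^ 2 * (real v - 1)^3)"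
proof -
  have v: "real v \<noteq> 0" "real v - 1 \<noteq> 0" using assms by auto
  show "gm v t 0 = 0" by (simp add: gm_def)
  show "gm v 1 1 = 1 / (real v - 1)" using v by (simp add: gm_def field_simps, (simp add: eval_nat_numeral algebra_simps)?)
  show "gm v 2 1 = 1 / (real v * (real v - 1))" using v by (simp add: gm_def field_simps, (simp add: eval_nat_numeral algebra_simps)?)
  show "gm v 2 2 = (real v - 2) / (real v * (real v - 1)^2)" using v by (simp add: gm_def field_simps, (simp add: eval_nat_numeral algebra_simps)?)
  show "gm v 3 1 = 1 / (real v ^ 2 * (real v - 1))" using v by (simp add: gm_def field_simps, (simp add: eval_nat_numeral algebra_simps)?)
  show "gm v 3 2 = (real v - 2) / (real v ^ 2 * (real v - 1)^2)" using v by (simp add: gm_def field_simps, (simp add: eval_nat_numeral algebra_simps)?)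
  show "gm v 3 3 = (real v ^ 2 - 3 * real v + 3) / (real v ^ 2 * (real v - 1)^3)" using v by (simp add: gm_def field_simps, (simp add: eval_nat_numeral algebra_simps)?)
qed

lemma info_diag':
  assumes p: "p \<in> coords K v" and q: "q \<in> coords K v" and v: "v \<ge> 2"
    and eq: "seldom p = seldom q" and SK: "S \<le> K" and dS: "d \<le> S" and tS: "card (seldom p) \<le> S"
  shows "info_matrix v (uniform_design K v S d) p q =
    2 * (\<Prod>t\<in>seldom p. cc p q t) * (\<Sum>b\<le>card (seldom p). real (card (seldom p) choose b) *
       gm v (card (seldom p)) b * ff d b * ff (S - d) (card (seldom p) - b)) / ff K (card (seldom p))"
  unfolding info_diag[OF assms] gm_def by (simp add: sum_distrib_left mult_ac)

lemma case_Main: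
  assumes p: "Main k a \<in> coords K v" and q: "Main k a' \<in> coords K v" and v: "v \<ge> 2"
    and K: "K \<ge> 3" and S: "3 \<le> S" "S \<le> K" and d: "d \<le> S"
  shows "info_matrix v (uniform_design K v S d) (Main k a) (Main k a') = block_matrix K v S d (Main k a) (Main k a')"
proof -
  define c where "c = (if a = a' then 1 else 0) + (1::real)"
  have cc: "(\<Prod>t\<in>seldom (Main k a). cc (Main k a) (Main k a') t) = c" by (simp add: cc_def c_def)
  have v1: "real v - 1 \<noteq> 0" "real v \<noteq> 0" using v by auto
  have K0: "real K \<noteq> 0" using K by auto
  have "info_matrix v (uniform_design K v S d) (Main k a) (Main k a') =
     2 * c * (\<Sum>b\<le>1. real (1 choose b) * gm v 1 b * ff d b * ff (S - d) (1 - b)) / ff K 1"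
    using info_diag'[OF p q v _ S(2) d] S cc by simp
  also have "\<dots> = 2 * c * (real d / (real v - 1)) / real K"
    using gm_vals[OF v] by (simp add: sum_le1 ff_small ff_Suc_small)
  also have "\<dots> = h1 K v S d * Mmat v a a'"
    using v1 K0 by (simp add: h1_def Mmat_def c_def field_simps)
  finally show ?thesis by simp
qed

lemma alg2: fixes w k s d ca cb :: real
  assumes "w - 1 \<noteq> 0" "w \<noteq> 0" "k \<noteq> 0" "k - 1 \<noteq> 0"
  shows "2 * (ca * cb) * (2 * (1/(w * (w-1))) * d * (s-d) + (w-2)/(w * (w-1)^2) * (d * (d-1)))/(k * (k-1)) = d/(2 * w * k * (k-1)) * (2 * s * w-2 * s-d * w-w+2)  *  (2/(w-1) * ca  *  (2/(w-1) * cb))"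
  using assms by (simp add: divide_simps) (simp add: algebra_simps power2_eq_square)

lemma alg3: fixes w k s d ca cb cc :: real
  assumes "w - 1 \<noteq> 0" "w \<noteq> 0" "k \<noteq> 0" "k - 1 \<noteq> 0" "k - 2 \<noteq> 0"
  shows "2 * (ca * cb * cc) * (3  *  (1/(w^2 * (w-1)))  *  d  *  ((s-d) * ((s-d)-1)) + 3  *  ((w-2)/(w^2 * (w-1)^2))  *  (d * (d-1))  *  (s-d) + (w^2-3 * w+3)/(w^2 * (w-1)^3)  *  (d * (d-1) * (d-2)))/(k * (k-1) * (k-2))
   = d  *  (3 * s^2 + 3 * s^2 * w^2 - 6 * s^2 * w - 3 * s * d * w^2 + 3 * s * d * w - 6 * s * w^2 + 15 * s * w - 9 * s + d^2 * w^2 + 3 * d * w^2 - 6 * d * w + 2 * w^2 - 6 * w + 6) / (4  *  w^2  *  k  *  (k-1)  *  (k-2))  *  (2/(w-1) * ca  *  (2/(w-1) * cb)  *  (2/(w-1) * cc))"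
  using assms by (simp add: divide_simps) (simp add: algebra_simps eval_nat_numeral)

lemma case_Int2:
  assumes p: "Int2 k l a b \<in> coords K v" and q: "Int2 k l a' b' \<in> coords K v" and v: "v \<ge> 2"
    and K: "K \<ge> 3" and S: "3 \<le> S" "S \<le> K" and d: "d \<le> S"
  shows "info_matrix v (uniform_design K v S d) (Int2 k l a b) (Int2 k l a' b') = block_matrix K v S d (Int2 k l a b) (Int2 k l a' b')"
proof -
  define ca where "ca = (if a = a' then 1 else 0) + (1::real)"
  define cb where "cb = (if b = b' then 1 else 0) + (1::real)"
  have kl: "k < l" using p by (auto simp: coords_def)
  have cc: "(\<Prod>t\<in>seldom (Int2 k l a b). cc (Int2 k l a b) (Int2 k l a' b') t) = ca * cb"
    using kl by (simp add: cc_def ca_def cb_def)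
  have card: "card (seldom (Int2 k l a b)) = 2" using kl by simp
  have v1: "real v - 1 \<noteq> 0" "real v \<noteq> 0" using v by auto
  have K0: "real K \<noteq> 0" "real K - 1 \<noteq> 0" using K by auto
  have Sd: "real (S - d) = real S - real d" using d by simp
  have "info_matrix v (uniform_design K v S d) (Int2 k l a b) (Int2 k l a' b') =
     2 * (ca * cb) * (\<Sum>b\<le>2. real (2 choose b) * gm v 2 b * ff d b * ff (S - d) (2 - b)) / ff K 2"
    using info_diag'[OF p q v _ S(2) d] S cc card by simp
  also have "\<dots> = 2 * (ca * cb) * (2 * (1 / (real v * (real v - 1))) * real d * (real S - real d)
        + (real v - 2) / (real v * (real v - 1)^2) * (real d * (real d - 1))) / (real K * (real K - 1))"
    using gm_vals[OF v] Sd by (simp add: sum_le2 ff_small ff_Suc_small binom_small)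
  also have "\<dots> = h2 K v S d * (Mmat v a a' * Mmat v b b')"
    unfolding h2_def Mmat_def ca_def[symmetric] cb_def[symmetric] by (rule alg2[OF v1 K0])
  finally show ?thesis by simp
qed

lemma case_Int3:
  assumes p: "Int3 k l m a b c \<in> coords K v" and q: "Int3 k l m a' b' c' \<in> coords K v" and v: "v \<ge> 2"
    and K: "K \<ge> 3" and S: "3 \<le> S" "S \<le> K" and d: "d \<le> S"
  shows "info_matrix v (uniform_design K v S d) (Int3 k l m a b c) (Int3 k l m a' b' c') = block_matrix K v S d (Int3 k l m a b c) (Int3 k l m a' b' c')"
proof -
  define ca where "ca = (if a = a' then 1 else 0) + (1::real)"
  define cb where "cb = (if b = b' then 1 else 0) + (1::real)"
  define ccc where "ccc = (if c = c' then 1 else 0) + (1::real)"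
  have kl: "k < l" "l < m" using p by (auto simp: coords_def)
  have cc: "(\<Prod>t\<in>seldom (Int3 k l m a b c). cc (Int3 k l m a b c) (Int3 k l m a' b' c') t) = ca * cb * ccc"
    using kl by (simp add: cc_def ca_def cb_def ccc_def)
  have card: "card (seldom (Int3 k l m a b c)) = 3" using kl by simp
  have v1: "real v - 1 \<noteq> 0" "real v \<noteq> 0" using v by auto
  have K0: "real K \<noteq> 0" "real K - 1 \<noteq> 0" "real K - 2 \<noteq> 0" using K by auto
  have Sd: "real (S - d) = real S - real d" using d by simp
  have "info_matrix v (uniform_design K v S d) (Int3 k l m a b c) (Int3 k l m a' b' c') =
     2 * (ca * cb * ccc) * (\<Sum>b\<le>3. real (3 choose b) * gm v 3 b * ff d b * ff (S - d) (3 - b)) / ff K 3"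
    using info_diag'[OF p q v _ S(2) d] S cc card by simp
  also have "\<dots> = 2*(ca*cb*ccc)*(3 * (1/(real v^2*(real v-1))) * real d * ((real S-real d)*((real S-real d)-1))
       + 3 * ((real v-2)/(real v^2*(real v-1)^2)) * (real d*(real d-1)) * (real S-real d)
       + (real v^2-3*real v+3)/(real v^2*(real v-1)^3) * (real d*(real d-1)*(real d-2)))/(real K*(real K-1)*(real K-2))"
    using gm_vals[OF v] Sd by (simp add: sum_le3 ff_small ff_Suc_small binom_small)
  also have "\<dots> = h3 K v S d * (Mmat v a a' * Mmat v b b' * Mmat v c c')"
    unfolding h3_def lambda_d_def Mmat_def ca_def[symmetric] cb_def[symmetric] ccc_def[symmetric]
    by (rule alg3[OF v1 K0])
  finally show ?thesis by simp
qed

theorem lemma1: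
  fixes K v S d :: nat
  assumes "v \<ge> 2" and "K \<ge> 3" and "3 \<le> S" and "S \<le> K" and "d \<le> S"
  shows "\<forall>p\<in>coords K v. \<forall>q\<in>coords K v.
           info_matrix v (uniform_design K v S d) p q = block_matrix K v S d p q"
proof (intro ballI)
  fix p q assume p: "p \<in> coords K v" and q: "q \<in> coords K v"
  show "info_matrix v (uniform_design K v S d) p q = block_matrix K v S d p q"
  proof (cases "seldom p = seldom q")
    case False
    have ADpos: "card (AD K S d) > 0" using card_AD[OF assms(4)] assms by simp
    show ?thesis using info_formula[OF p q assms(1) ADpos] False block_off[OF False] by simp
  next
    case True
    from seldom_eq_cases[OF p q True] show ?thesis
    proof (elim disjE exE conjE)
      fix k a a' assume "p = Main k a" "q = Main k a'"
      then show ?thesis using case_Main p q assms by simp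
    next
      fix k l a b a' b' assume "p = Int2 k l a b" "q = Int2 k l a' b'"
      then show ?thesis using case_Int2 p q assms by simp
    next
      fix k l m a b c a' b' c' assume "p = Int3 k l m a b c" "q = Int3 k l m a' b' c'"
      then show ?thesis using case_Int3 p q assms by simp
    qed
  qed
qed

end
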